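(* If a nondegenerate triangle is circumscribed about a hyperbola one of whose foci coincides with the circumcenter of the triangle, then the eccentricity $e$ of the hyperbola satisfies $1<e<3$.
   Context: A triangle is circumscribed about a conic if each of its three sidelines is tangent to the conic. The eccentricity of a hyperbola is $e=c/a$ where $c$ is half the distance between the foci and $a$ is the semi-transverse axis. *)

theory Defs
  imports "HOL-Analysis.Analysis"
begin

definition is_hyperbola :: "real^2 \<Rightarrow> real^2 \<Rightarrow> real \<Rightarrow> bool" where
  "is_hyperbola F1 F2 a \<longleftrightarrow> 0 < a \<and> 2 * a < dist F1 F2"

definition hyperbola :: "real^2 \<Rightarrow> real^2 \<Rightarrow> real \<Rightarrow> (real^2) set" where
  "hyperbola F1 F2 a = {P. \<bar>dist P F1 - dist P F2\<bar> = 2 * a}"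

definition hyperbola_eccentricity :: "real^2 \<Rightarrow> real^2 \<Rightarrow> real \<Rightarrow> real" where
  "hyperbola_eccentricity F1 F2 a = (dist F1 F2 / 2) / a"

definition line_through :: "real^2 \<Rightarrow> real^2 \<Rightarrow> (real^2) set" where
  "line_through A B = {A + t *\<^sub>R (B - A) | t. True}"

text \<open>A line L is tangent to the hyperbola if it passes through a point P of the
  hyperbola and, along L (parametrised through P with nonzero direction d), the defining
  function dist X F1 - dist X F2 of the hyperbola has vanishing derivative at P, i.e. L is
  the tangent line of the (smooth) level curve at P.\<close>
definition tangent_to_hyperbola :: "real^2 \<Rightarrow> real^2 \<Rightarrow> real \<Rightarrow> (real^2) set \<Rightarrow> bool" where
  "tangent_to_hyperbola F1 F2 a L \<longleftrightarrow>
     (\<exists>P d. d \<noteq> 0 \<and> P \<in> hyperbola F1 F2 a \<and> L = {P + t *\<^sub>R d | t. True} \<and>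
        ((\<lambda>t. dist (P + t *\<^sub>R d) F1 - dist (P + t *\<^sub>R d) F2) has_real_derivative 0) (at 0))"

definition circumscribed_about_hyperbola ::
  "real^2 \<Rightarrow> real^2 \<Rightarrow> real^2 \<Rightarrow> real^2 \<Rightarrow> real^2 \<Rightarrow> real \<Rightarrow> bool" where
  "circumscribed_about_hyperbola A B C F1 F2 a \<longleftrightarrow>
     tangent_to_hyperbola F1 F2 a (line_through A B) \<and>
     tangent_to_hyperbola F1 F2 a (line_through B C) \<and>
     tangent_to_hyperbola F1 F2 a (line_through C A)"

text \<open>Q is the circumcenter of triangle ABC (equidistant from the vertices; unique for a
  nondegenerate triangle).\<close>
definition is_circumcenter :: "real^2 \<Rightarrow> real^2 \<Rightarrow> real^2 \<Rightarrow> real^2 \<Rightarrow> bool" where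
  "is_circumcenter Q A B C \<longleftrightarrow> dist Q A = dist Q B \<and> dist Q B = dist Q C"

end

theory Submission
  imports Defs
begin

lemma inner2: "inner (x::real^2) y = x$1*y$1 + x$2*y$2"
  by (simp add: inner_vec_def sum_2)

lemma lemA:
  fixes u v d :: "real^2"
  assumes "inner u u = 1" "inner v v = 1" "inner d u = inner d v" "u \<noteq> v"
  shows "inner d d * (inner u v + 1) = 2 * (inner d u)^2"
proof -
  have w: "u$1 \<noteq> v$1 \<or> u$2 \<noteq> v$2" using assms(4) by (metis vec_eq_iff exhaust_2)
  define w1 where "w1 = u$1 - v$1"
  define w2 where "w2 = u$2 - v$2"
  define z1 where "z1 = u$1 + v$1"
  define z2 where "z2 = u$2 + v$2"
  have u1: "u$1 = (z1+w1)/2" "u$2 = (z2+w2)/2" "v$1 = (z1-w1)/2" "v$2 = (z2-w2)/2"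
    unfolding w1_def w2_def z1_def z2_def by simp_all
  have n: "((z1+w1)/2)^2 + ((z2+w2)/2)^2 = 1" "((z1-w1)/2)^2 + ((z2-w2)/2)^2 = 1"
    using assms(1,2) unfolding inner2 u1 by (simp_all add: power2_eq_square)
  have e1: "w1*z1 + w2*z2 = 0" using n by (simp add: field_simps power2_eq_square) 
  have e2: "w1*d$1 + w2*d$2 = 0" using assms(3) unfolding inner2 u1 by (simp add: field_simps) 
  have "w1 * (z1*d$2 - z2*d$1) = 0" using e1 e2 by algebra
  moreover have "w2 * (z1*d$2 - z2*d$1) = 0" using e1 e2 by algebra
  ultimately have det: "z1*d$2 - z2*d$1 = 0" using w unfolding w1_def w2_def by auto
  have ww: "w1^2 + w2^2 = 4 - (z1^2+z2^2)" using n by (simp add: field_simps power2_eq_square)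
  have lag: "((d$1)^2+(d$2)^2)*(z1^2+z2^2) = (d$1*z1+d$2*z2)^2" using det by algebra
  have hd: "d$1*((z1+w1)/2) + d$2*((z2+w2)/2) = (d$1*z1+d$2*z2)/2" using e2 by (simp add: field_simps) 
  have hu: "((z1+w1)/2)*((z1-w1)/2) + ((z2+w2)/2)*((z2-w2)/2) + 1 = (z1^2+z2^2)/2"
    using ww by (simp add: field_simps power2_eq_square)
  have "inner d d * (inner u v + 1) = ((d$1)^2+(d$2)^2) * ((z1^2+z2^2)/2)"
    unfolding inner2 u1 hu[symmetric] by (simp add: power2_eq_square)
  also have "\<dots> = 2 * ((d$1*z1+d$2*z2)/2)^2" using lag by (simp add: power2_eq_square field_simps)
  also have "\<dots> = 2 * (inner d u)^2" unfolding inner2 u1 hd ..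
  finally show ?thesis .
qed
lemma lemB:
  fixes x p q :: "real^2"
  assumes "inner x p = 0" "inner x q = 0" "p$1*q$2 - p$2*q$1 \<noteq> 0"
  shows "x = 0"
proof -
  have h1: "x$1*p$1 + x$2*p$2 = 0" "x$1*q$1 + x$2*q$2 = 0" using assms(1,2) unfolding inner2 by auto
  have "x$1 * (p$1*q$2 - p$2*q$1) = q$2 * (x$1*p$1 + x$2*p$2) - p$2 * (x$1*q$1 + x$2*q$2)"
    by (simp add: algebra_simps)
  then have "x$1 * (p$1*q$2 - p$2*q$1) = 0" using h1 by simp
  then have 1: "x$1 = 0" using assms(3) by simp
  have "x$2 * (p$1*q$2 - p$2*q$1) = p$1 * (x$1*q$1 + x$2*q$2) - q$1 * (x$1*p$1 + x$2*p$2)"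
    by (simp add: algebra_simps)
  then have "x$2 * (p$1*q$2 - p$2*q$1) = 0" using h1 by simp
  then have 2: "x$2 = 0" using assms(3) by simp
  show ?thesis using 1 2 by (simp add: vec_eq_iff forall_2)
qed

lemma lemC0:
  fixes p q :: "real^2"
  assumes h: "p$1*q$2 - p$2*q$1 = 0"
  shows "collinear {0, p, q}"
proof (cases "p = 0")
  case False
  then have "p$1 \<noteq> 0 \<or> p$2 \<noteq> 0" by (simp add: vec_eq_iff forall_2)
  then show ?thesis
  proof
    assume n: "p$1 \<noteq> 0"
    have "q$2 = (q$1/p$1) * p$2" using n h by (simp add: field_simps)
    then have "q = (q$1/p$1) *\<^sub>R p" using n by (simp add: vec_eq_iff forall_2)
    then show ?thesis using collinear_lemma by blast
  next
    assume n: "p$2 \<noteq> 0"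
    have "q$1 = (q$2/p$2) * p$1" using n h by (simp add: field_simps)
    then have "q = (q$2/p$2) *\<^sub>R p" using n by (simp add: vec_eq_iff forall_2)
    then show ?thesis using collinear_lemma by blast
  qed
qed (simp add: collinear_lemma)

lemma lemC:
  fixes A B C :: "real^2"
  assumes "\<not> collinear {A,B,C}"
  shows "(B-A)$1*(C-A)$2 - (B-A)$2*(C-A)$1 \<noteq> 0"
proof
  assume h: "(B-A)$1*(C-A)$2 - (B-A)$2*(C-A)$1 = 0"
  have "collinear {0, B-A, C-A}" by (rule lemC0[OF h])
  then have "collinear {B,A,C}" using collinear_3[of B A C] by simp
  then have "collinear {A,B,C}" by (simp add: insert_commute)
  with assms show False by simp
qed
lemma deriv_dist:
  fixes P d F :: "real^2"
  assumes "P \<noteq> F"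
  shows "((\<lambda>t. dist (P + t *\<^sub>R d) F) has_real_derivative inner (sgn (P - F)) d) (at 0)"
proof -
  have 1: "((\<lambda>t. P + t *\<^sub>R d - F) has_derivative (\<lambda>h. h *\<^sub>R d)) (at 0)"
    by (auto intro!: derivative_eq_intros)
  have 2: "(norm has_derivative (\<lambda>h. inner h (sgn (P - F)))) (at ((\<lambda>t. P + t *\<^sub>R d - F) 0))"
    using has_derivative_norm[of "P - F"] assms by simp
  have "((\<lambda>t. norm (P + t *\<^sub>R d - F)) has_derivative (\<lambda>h. inner (h *\<^sub>R d) (sgn (P - F)))) (at 0)"
    using has_derivative_compose[OF 1 2] by (simp add: o_def)
  moreover have "(\<lambda>h. inner (h *\<^sub>R d) (sgn (P - F))) = (*) (inner (sgn (P - F)) d)"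
    by (auto simp: inner_commute)
  ultimately show ?thesis
    unfolding has_field_derivative_def dist_norm by simp
qed


lemma perp_of_equi:
  fixes Q N M1 M2 :: "real^2"
  assumes "dist Q M1 = dist Q M2" "dist N M1 = dist N M2"
  shows "inner (Q - N) (M2 - M1) = 0"
proof -
  have 1: "inner (Q-M1) (Q-M1) = inner (Q-M2) (Q-M2)"
    using assms(1) unfolding dist_norm by (metis power2_norm_eq_inner)
  have 2: "inner (N-M1) (N-M1) = inner (N-M2) (N-M2)"
    using assms(2) unfolding dist_norm by (metis power2_norm_eq_inner)
  have 3: "inner (Q-M1) (Q-M1) - inner (Q-M2) (Q-M2) - (inner (N-M1) (N-M1) - inner (N-M2) (N-M2))
     = 2 * inner (Q - N) (M2 - M1)"
    by (simp add: inner_diff_left inner_diff_right inner_commute)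
  show ?thesis using 1 2 3 by simp
qed

lemma tangent_mid:
  fixes F G X Y :: "real^2" and a :: real
  assumes hyp: "is_hyperbola F G a" and tan: "tangent_to_hyperbola F G a (line_through X Y)"
    and XY: "X \<noteq> Y" and eq: "dist F X = dist F Y"
  shows "dist ((1/2) *\<^sub>R (X+Y)) ((1/2) *\<^sub>R (F+G)) = a"
proof -
  obtain P d where d0: "d \<noteq> 0" and Ph: "P \<in> hyperbola F G a"
    and L: "line_through X Y = {P + t *\<^sub>R d | t. True}"
    and der: "((\<lambda>t. dist (P + t *\<^sub>R d) F - dist (P + t *\<^sub>R d) G) has_real_derivative 0) (at 0)"
    using tan unfolding tangent_to_hyperbola_def by blast
  have a0: "0 < a" and ac: "2*a < dist F G" using hyp unfolding is_hyperbola_def by auto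
  have hP: "\<bar>dist P F - dist P G\<bar> = 2*a" using Ph unfolding hyperbola_def by simp
  have "X \<in> line_through X Y" unfolding line_through_def by (auto intro: exI[of _ 0])
  then obtain t1 where t1: "X = P + t1 *\<^sub>R d" using L by auto
  have "Y \<in> line_through X Y" unfolding line_through_def by (auto intro: exI[of _ 1])
  then obtain t2 where t2: "Y = P + t2 *\<^sub>R d" using L by auto
  have t12: "t1 \<noteq> t2" using XY t1 t2 by auto
  have PF: "P \<noteq> F"
  proof
    assume "P = F" then show False using hP ac by (simp add: dist_commute)
  qed
  have PG: "P \<noteq> G"
  proof
    assume "P = G" then show False using hP ac by (simp add: dist_commute)
  qed
  define r1 where "r1 = norm (P - F)"
  define r2 where "r2 = norm (P - G)"
  define u where "u = sgn (P - F)"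
  define v where "v = sgn (P - G)"
  have r1p: "r1 > 0" using PF unfolding r1_def by simp
  have r2p: "r2 > 0" using PG unfolding r2_def by simp
  have Pu: "P - F = r1 *\<^sub>R u" unfolding r1_def u_def using PF by (simp add: sgn_div_norm)
  have Pv: "P - G = r2 *\<^sub>R v" unfolding r2_def v_def using PG by (simp add: sgn_div_norm)
  have nu: "norm u = 1" unfolding u_def using PF by (simp add: norm_sgn)
  have nv: "norm v = 1" unfolding v_def using PG by (simp add: norm_sgn)
  have uu: "inner u u = 1" using nu by (metis power2_norm_eq_inner power_one)
  have vv: "inner v v = 1" using nv by (metis power2_norm_eq_inner power_one)
  have "((\<lambda>t. dist (P + t *\<^sub>R d) F - dist (P + t *\<^sub>R d) G) has_real_derivative
          inner (sgn (P - F)) d - inner (sgn (P - G)) d) (at 0)"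
    by (intro DERIV_diff deriv_dist PF PG)
  then have "inner (sgn (P - F)) d - inner (sgn (P - G)) d = 0"
    using der DERIV_unique by blast
  then have du: "inner d u = inner d v" unfolding u_def v_def by (simp add: inner_commute)
  have uv: "u \<noteq> v"
  proof
    assume "u = v"
    then have "G - F = (r1 - r2) *\<^sub>R u" using Pu Pv by (simp add: algebra_simps)
    then have "dist F G = norm ((r1 - r2) *\<^sub>R u)" by (metis dist_norm dist_commute)
    then have "dist F G = \<bar>r1 - r2\<bar>" using nu by simp
    moreover have "\<bar>r1 - r2\<bar> = 2*a" using hP unfolding r1_def r2_def by (simp add: dist_norm)
    ultimately show False using ac by simp
  qed
  have key: "inner d d * (inner u v + 1) = 2 * (inner d u)^2"
    using lemA[OF uu vv du uv] .
  define D where "D = inner d d"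
  define \<alpha> where "\<alpha> = inner d u"
  define w where "w = inner u v"
  have Dp: "D > 0" using d0 unfolding D_def by simp
  define s where "s = (t1 + t2)/2"
  have XY2: "X + Y = 2 *\<^sub>R P + (t1 + t2) *\<^sub>R d"
    unfolding t1 t2 by (simp add: scaleR_2 scaleR_add_left add_ac)
  have Mdef: "(1/2) *\<^sub>R (X+Y) = P + s *\<^sub>R d" unfolding XY2 s_def
    by (simp add: scaleR_add_right)
  have "(norm (X - F))^2 = (norm (Y - F))^2" using eq by (simp add: dist_norm norm_minus_commute)
  then have "inner (r1 *\<^sub>R u + t1 *\<^sub>R d) (r1 *\<^sub>R u + t1 *\<^sub>R d) = inner (r1 *\<^sub>R u + t2 *\<^sub>R d) (r1 *\<^sub>R u + t2 *\<^sub>R d)"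
    unfolding power2_norm_eq_inner using Pu t1 t2 by (simp add: algebra_simps)
  then have "r1*r1 + 2*t1*r1*\<alpha> + t1*t1*D = r1*r1 + 2*t2*r1*\<alpha> + t2*t2*D"
    unfolding \<alpha>_def D_def using uu by (simp add: inner_add_left inner_add_right inner_commute algebra_simps)
  then have "(t1 - t2) * (2*r1*\<alpha> + (t1+t2)*D) = 0" by (simp add: algebra_simps)
  then have h0: "2*r1*\<alpha> + (t1+t2)*D = 0" using t12 by simp
  have "s * D = ((t1+t2)*D)/2" unfolding s_def by simp
  also have "\<dots> = - r1 * \<alpha>" using h0 by linarith
  finally have sD: "s * D = - r1 * \<alpha>" .
  have Mq: "(1/2) *\<^sub>R (X+Y) - (1/2) *\<^sub>R (F+G) = s *\<^sub>R d + (r1/2) *\<^sub>R u + (r2/2) *\<^sub>R v"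
  proof -
    have FF: "F = P - r1 *\<^sub>R u" and GG: "G = P - r2 *\<^sub>R v" using Pu Pv by (simp_all add: algebra_simps)
    show ?thesis unfolding Mdef FF GG by (simp add: vec_eq_iff field_simps)
  qed
  have n2: "(dist ((1/2) *\<^sub>R (X+Y)) ((1/2) *\<^sub>R (F+G)))^2
      = s^2 * D + s*(r1*\<alpha> + r2*\<alpha>) + (r1^2 + 2*r1*r2*w + r2^2)/4"
    unfolding dist_norm Mq power2_norm_eq_inner D_def \<alpha>_def w_def using uu vv du
    by (simp add: inner_add_left inner_add_right inner_commute algebra_simps power2_eq_square)
  have ra: "(r1 - r2)^2 = (2*a)^2" using hP unfolding r1_def r2_def
    by (metis dist_norm power2_abs)
  have "D * (dist ((1/2) *\<^sub>R (X+Y)) ((1/2) *\<^sub>R (F+G)))^2 = D * a^2"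
  proof -
    have k: "D * (w + 1) = 2 * \<alpha>^2" using key unfolding D_def w_def \<alpha>_def .
    have "D * (s^2 * D + s*(r1*\<alpha> + r2*\<alpha>) + (r1^2 + 2*r1*r2*w + r2^2)/4)
        = (s*D)^2 + (s*D)*(r1*\<alpha> + r2*\<alpha>) + D*(r1^2 + r2^2)/4 + r1*r2*(D*w)/2"
      by (simp add: algebra_simps power2_eq_square)
    also have "\<dots> = D * ((r1 - r2)^2 / 4)"
    proof -
      have kw: "D * w = 2 * \<alpha>^2 - D" using k by (simp add: algebra_simps)
      show ?thesis unfolding sD kw by (simp add: field_simps power2_eq_square)
    qed
    also have "\<dots> = D * a^2" using ra by (simp add: power2_eq_square)
    finally show ?thesis using n2 by simp
  qed
  then have "(dist ((1/2) *\<^sub>R (X+Y)) ((1/2) *\<^sub>R (F+G)))^2 = a^2" using Dp by simp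
  then show ?thesis using a0 by (simp add: power2_eq_iff_nonneg)
qed

theorem corollary2p5:
  fixes A B C F1 F2 :: "real^2" and a :: real
  assumes "\<not> collinear {A, B, C}"
    and "is_hyperbola F1 F2 a"
    and "circumscribed_about_hyperbola A B C F1 F2 a"
    and "is_circumcenter F1 A B C"
  shows "1 < hyperbola_eccentricity F1 F2 a \<and> hyperbola_eccentricity F1 F2 a < 3"
proof -
  have a0: "0 < a" and ac: "2*a < dist F1 F2" using assms(2) unfolding is_hyperbola_def by auto
  have AB: "A \<noteq> B" and BC: "B \<noteq> C" and CA: "C \<noteq> A"
    using assms(1) by (auto simp: collinear_2 insert_commute)
  define R where "R = dist F1 C"
  have FA: "dist F1 A = R" and FB: "dist F1 B = R"
    using assms(4) unfolding is_circumcenter_def R_def by auto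
  define Q where "Q = (1/2) *\<^sub>R (F1 + F2)"
  define N where "N = (1/2) *\<^sub>R (A + B + C - F1)"
  define M1 where "M1 = (1/2) *\<^sub>R (A + B)"
  define M2 where "M2 = (1/2) *\<^sub>R (B + C)"
  define M3 where "M3 = (1/2) *\<^sub>R (C + A)"
  have t: "tangent_to_hyperbola F1 F2 a (line_through A B)"
          "tangent_to_hyperbola F1 F2 a (line_through B C)"
          "tangent_to_hyperbola F1 F2 a (line_through C A)"
    using assms(3) unfolding circumscribed_about_hyperbola_def by auto
  have q1: "dist M1 Q = a" unfolding M1_def Q_def by (rule tangent_mid[OF assms(2) t(1) AB]) (simp add: FA FB)
  have q2: "dist M2 Q = a" unfolding M2_def Q_def by (rule tangent_mid[OF assms(2) t(2) BC]) (simp add: FB R_def)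
  have q3: "dist M3 Q = a" unfolding M3_def Q_def by (rule tangent_mid[OF assms(2) t(3) CA]) (simp add: FA R_def)
  have n1: "dist N M1 = R/2"
  proof -
    have "N - M1 = (1/2) *\<^sub>R (C - F1)" unfolding N_def M1_def by (simp add: algebra_simps)
    then have "dist N M1 = (1/2) * dist C F1" by (simp add: dist_norm)
    then show ?thesis using FA FB unfolding R_def by (simp add: dist_commute)
  qed
  have n2: "dist N M2 = R/2"
  proof -
    have "N - M2 = (1/2) *\<^sub>R (A - F1)" unfolding N_def M2_def by (simp add: algebra_simps)
    then have "dist N M2 = (1/2) * dist A F1" by (simp add: dist_norm)
    then show ?thesis using FA FB unfolding R_def by (simp add: dist_commute)
  qed
  have n3: "dist N M3 = R/2"
  proof -
    have "N - M3 = (1/2) *\<^sub>R (B - F1)" unfolding N_def M3_def by (simp add: algebra_simps)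
    then have "dist N M3 = (1/2) * dist B F1" by (simp add: dist_norm)
    then show ?thesis using FA FB unfolding R_def by (simp add: dist_commute)
  qed
  have p1: "inner (Q - N) (M2 - M1) = 0"
    by (rule perp_of_equi) (use q1 q2 n1 n2 in \<open>simp_all add: dist_commute\<close>)
  have p2: "inner (Q - N) (M3 - M1) = 0"
    by (rule perp_of_equi) (use q1 q3 n1 n3 in \<open>simp_all add: dist_commute\<close>)
  have nc: "\<not> collinear {C, A, B}" using assms(1) by (simp add: insert_commute)
  have det: "(M2 - M1)$1 * (M3 - M1)$2 - (M2 - M1)$2 * (M3 - M1)$1 =
     ((A-C)$1*(B-C)$2 - (A-C)$2*(B-C)$1)/4"
    unfolding M1_def M2_def M3_def by (simp add: algebra_simps)
  have "Q - N = 0" using lemB[OF p1 p2] lemC[OF nc] det by simp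
  then have QN: "Q = N" by simp
  have aR: "a = R/2" using q1 n1 QN by (simp add: dist_commute)
  have "F2 - F1 = (A - F1) + (B - F1) + (C - F1)"
  proof -
    have "F2 = 2 *\<^sub>R Q - F1" unfolding Q_def by (simp add: algebra_simps)
    then show ?thesis unfolding QN N_def by (simp add: algebra_simps)
  qed
  then have dF: "dist F1 F2 = norm ((A - F1) + (B - F1) + (C - F1))" by (metis dist_norm dist_commute)
  define x where "x = A - F1"
  define y where "y = B - F1"
  define z where "z = C - F1"
  have xx: "inner x x = R^2" using FA unfolding x_def dist_norm by (metis norm_minus_commute power2_norm_eq_inner)
  have yy: "inner y y = R^2" using FB unfolding y_def dist_norm by (metis norm_minus_commute power2_norm_eq_inner)
  have zz: "inner z z = R^2" unfolding R_def z_def dist_norm by (metis norm_minus_commute power2_norm_eq_inner)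
  have xy: "inner x y < R^2"
  proof -
    have "0 < inner (x - y) (x - y)" using AB unfolding x_def y_def by simp
    then show ?thesis using xx yy by (simp add: inner_diff_left inner_diff_right inner_commute)
  qed
  have yz: "inner y z \<le> R^2"
  proof -
    have "0 \<le> inner (y - z) (y - z)" by simp
    then show ?thesis using zz yy by (simp add: inner_diff_left inner_diff_right inner_commute)
  qed
  have zx: "inner z x \<le> R^2"
  proof -
    have "0 \<le> inner (z - x) (z - x)" by simp
    then show ?thesis using zz xx by (simp add: inner_diff_left inner_diff_right inner_commute)
  qed
  have "(norm (x + y + z))^2 = inner x x + inner y y + inner z z + 2 * (inner x y + inner y z + inner z x)"
    unfolding power2_norm_eq_inner by (simp add: inner_add_left inner_add_right inner_commute)
  also have "\<dots> < (3*R)^2" using xx yy zz xy yz zx by (simp add: power2_eq_square)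
  finally have "(norm (x + y + z))^2 < (3*R)^2" .
  then have "norm (x + y + z) < 3*R" using aR a0 power2_less_imp_less[of "norm (x + y + z)" "3*R"] by simp
  then have d6: "dist F1 F2 < 6*a" using dF aR unfolding x_def y_def z_def by simp
  show ?thesis unfolding hyperbola_eccentricity_def using a0 ac d6 by (simp add: field_simps)
qed

end
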